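(* Any (randomized) voting rule taking top-$t$ preference profiles as input with constant metric distortion has utilitarian distortion $\Omega\!\left(\max\!\left(\frac{m\sqrt m}{t\sqrt t},\sqrt m\right)\right)$.
   Context: Setting: $n$ agents, $m$ alternatives; each agent has an underlying strict ranking, but the rule only receives each agent's ordered list of her top $t$ alternatives (a top-$t$ profile $\vec\sigma_t$) and outputs a distribution over alternatives. A metric (pseudometric on agents and alternatives) or a unit-sum utility profile is consistent with $\vec\sigma_t$ if it is consistent with some full ranking profile extending $\vec\sigma_t$, where $d$ is consistent with full $\vec\sigma$ if $X\succ_iY\Rightarrow d(i,X)\le d(i,Y)$ and $\vec u$ if $X\succ_iY\Rightarrow u_i(X)\ge u_i(Y)$. $\mathrm{SC}(X,d)=\sum_id(i,X)$, $\mathrm{SW}(X,\vec u)=\sum_iu_i(X)$ with $u_i\ge0$, $\sum_Xu_i(X)=1$. Metric distortion: worst case over top-$t$ profiles and consistent $d$ of $\mathbb E[\mathrm{SC}(\text{output},d)]/\min_X\mathrm{SC}(X,d)$; utilitarian distortion: worst case over top-$t$ profiles and consistent $\vec u$ of $\max_X\mathrm{SW}(X,\vec u)/\mathbb E[\mathrm{SW}(\text{output},\vec u)]$. *)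

theory Defs
  imports Complex_Main "HOL-Library.Extended_Real"
begin

text \<open>Alternatives are 0..<m, agents are 0..<n. A top-t profile is a list (one entry per
agent, n = length) of lists of length t of distinct alternatives, the i-th list being agent i's
ordered top-t list. A full ranking is a list enumerating all alternatives, best first.\<close>

definition top_profile :: "nat \<Rightarrow> nat \<Rightarrow> nat list list \<Rightarrow> bool" where
  "top_profile m t \<sigma> \<longleftrightarrow> \<sigma> \<noteq> [] \<and>
     (\<forall>s\<in>set \<sigma>. length s = t \<and> distinct s \<and> set s \<subseteq> {..<m})"

definition full_extension :: "nat \<Rightarrow> nat list list \<Rightarrow> nat list list \<Rightarrow> bool" where
  "full_extension m \<sigma> \<tau> \<longleftrightarrow> length \<tau> = length \<sigma> \<and>
     (\<forall>i<length \<sigma>. distinct (\<tau>!i) \<and> set (\<tau>!i) = {..<m} \<and>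
        take (length (\<sigma>!i)) (\<tau>!i) = \<sigma>!i)"

definition prefers :: "nat list \<Rightarrow> nat \<Rightarrow> nat \<Rightarrow> bool" where
  "prefers r X Y \<longleftrightarrow> (\<exists>a b. a < b \<and> b < length r \<and> r!a = X \<and> r!b = Y)"

text \<open>Points: Inl i = agent i, Inr X = alternative X.\<close>
definition pseudometric_on :: "(nat + nat) set \<Rightarrow> ((nat + nat) \<Rightarrow> (nat + nat) \<Rightarrow> real) \<Rightarrow> bool" where
  "pseudometric_on P d \<longleftrightarrow>
     (\<forall>x\<in>P. d x x = 0) \<and> (\<forall>x\<in>P. \<forall>y\<in>P. d x y \<ge> 0 \<and> d x y = d y x) \<and>
     (\<forall>x\<in>P. \<forall>y\<in>P. \<forall>z\<in>P. d x z \<le> d x y + d y z)"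

definition metric_consistent :: "nat \<Rightarrow> nat list list \<Rightarrow> ((nat + nat) \<Rightarrow> (nat + nat) \<Rightarrow> real) \<Rightarrow> bool" where
  "metric_consistent m \<sigma> d \<longleftrightarrow>
     pseudometric_on (Inl ` {..<length \<sigma>} \<union> Inr ` {..<m}) d \<and>
     (\<exists>\<tau>. full_extension m \<sigma> \<tau> \<and>
        (\<forall>i<length \<sigma>. \<forall>X Y. prefers (\<tau>!i) X Y \<longrightarrow> d (Inl i) (Inr X) \<le> d (Inl i) (Inr Y)))"

definition utility_consistent :: "nat \<Rightarrow> nat list list \<Rightarrow> (nat \<Rightarrow> nat \<Rightarrow> real) \<Rightarrow> bool" where
  "utility_consistent m \<sigma> u \<longleftrightarrow>
     (\<forall>i<length \<sigma>. (\<forall>X<m. u i X \<ge> 0) \<and> (\<Sum>X<m. u i X) = 1) \<and>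
     (\<exists>\<tau>. full_extension m \<sigma> \<tau> \<and>
        (\<forall>i<length \<sigma>. \<forall>X Y. prefers (\<tau>!i) X Y \<longrightarrow> u i X \<ge> u i Y))"

definition SC :: "nat list list \<Rightarrow> ((nat + nat) \<Rightarrow> (nat + nat) \<Rightarrow> real) \<Rightarrow> nat \<Rightarrow> real" where
  "SC \<sigma> d X = (\<Sum>i<length \<sigma>. d (Inl i) (Inr X))"

definition SW :: "nat list list \<Rightarrow> (nat \<Rightarrow> nat \<Rightarrow> real) \<Rightarrow> nat \<Rightarrow> real" where
  "SW \<sigma> u X = (\<Sum>i<length \<sigma>. u i X)"

definition is_rule :: "nat \<Rightarrow> nat \<Rightarrow> (nat list list \<Rightarrow> nat \<Rightarrow> real) \<Rightarrow> bool" where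
  "is_rule m t f \<longleftrightarrow> (\<forall>\<sigma>. top_profile m t \<sigma> \<longrightarrow>
     (\<forall>X<m. f \<sigma> X \<ge> 0) \<and> (\<Sum>X<m. f \<sigma> X) = 1)"

text \<open>Ratio on one instance; conventions: 0/0 = 1, positive/0 = infinity.\<close>
definition metric_ratio :: "nat \<Rightarrow> (nat list list \<Rightarrow> nat \<Rightarrow> real) \<Rightarrow> nat list list \<Rightarrow>
    ((nat + nat) \<Rightarrow> (nat + nat) \<Rightarrow> real) \<Rightarrow> ereal" where
  "metric_ratio m f \<sigma> d =
     (let E = (\<Sum>X<m. f \<sigma> X * SC \<sigma> d X); opt = (MIN X\<in>{..<m}. SC \<sigma> d X) in
      if opt > 0 then ereal (E / opt) else if E = 0 then 1 else \<infinity>)"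

definition metric_distortion :: "nat \<Rightarrow> nat \<Rightarrow> (nat list list \<Rightarrow> nat \<Rightarrow> real) \<Rightarrow> ereal" where
  "metric_distortion m t f =
     (SUP p\<in>{(\<sigma>, d). top_profile m t \<sigma> \<and> metric_consistent m \<sigma> d}. metric_ratio m f (fst p) (snd p))"

definition util_ratio :: "nat \<Rightarrow> (nat list list \<Rightarrow> nat \<Rightarrow> real) \<Rightarrow> nat list list \<Rightarrow>
    (nat \<Rightarrow> nat \<Rightarrow> real) \<Rightarrow> ereal" where
  "util_ratio m f \<sigma> u =
     (let E = (\<Sum>X<m. f \<sigma> X * SW \<sigma> u X); opt = (MAX X\<in>{..<m}. SW \<sigma> u X) in
      if E > 0 then ereal (opt / E) else \<infinity>)"

definition util_distortion :: "nat \<Rightarrow> nat \<Rightarrow> (nat list list \<Rightarrow> nat \<Rightarrow> real) \<Rightarrow> ereal" where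
  "util_distortion m t f =
     (SUP p\<in>{(\<sigma>, u). top_profile m t \<sigma> \<and> utility_consistent m \<sigma> u}. util_ratio m f (fst p) (snd p))"

end

theory Submission
  imports Defs
begin


definition ext :: "nat \<Rightarrow> nat list \<Rightarrow> nat set \<Rightarrow> nat list" where
 "ext m s T = s @ filter (\<lambda>X. X \<in> T \<and> X \<notin> set s) [0..<m] @ filter (\<lambda>X. X \<notin> T \<and> X \<notin> set s) [0..<m]"

lemma ext_distinct: "distinct s \<Longrightarrow> distinct (ext m s T)"
  unfolding ext_def by (auto simp: distinct_filter)

lemma ext_set: "set s \<subseteq> {..<m} \<Longrightarrow> set (ext m s T) = {..<m}"
  unfolding ext_def by auto

lemma ext_take: "take (length s) (ext m s T) = s"
  unfolding ext_def by simp

lemma ext_take': "length s = t \<Longrightarrow> take t (ext m s T) = s"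
  using ext_take by blast

lemma ext_length: "set s \<subseteq> {..<m} \<Longrightarrow> distinct s \<Longrightarrow> length (ext m s T) = m"
proof -
  assume a: "set s \<subseteq> {..<m}" "distinct s"
  have "length (ext m s T) = card (set (ext m s T))"
    using ext_distinct[OF a(2)] by (simp add: distinct_card)
  also have "\<dots> = m" using ext_set[OF a(1)] by simp
  finally show ?thesis .
qed

lemma ext_pref:
  assumes "set s \<subseteq> T" "prefers (ext m s T) X Y" "Y \<in> T"
  shows "X \<in> T"
proof -
  define B where "B = filter (\<lambda>X. X \<in> T \<and> X \<notin> set s) [0..<m]"
  define D where "D = filter (\<lambda>X. X \<notin> T \<and> X \<notin> set s) [0..<m]"
  have r: "ext m s T = (s @ B) @ D" unfolding ext_def B_def D_def by simp
  have sB: "set (s @ B) \<subseteq> T" using assms(1) unfolding B_def by auto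
  have sD: "set D \<inter> T = {}" unfolding D_def by auto
  from assms(2) obtain a b where ab: "a < b" "b < length (ext m s T)" "ext m s T ! a = X" "ext m s T ! b = Y"
    unfolding prefers_def by blast
  show ?thesis
  proof (cases "b < length (s @ B)")
    case True
    then have "ext m s T ! a = (s@B) ! a" unfolding r using ab(1) by (intro nth_append_left) simp
    moreover have "(s@B) ! a \<in> set (s @ B)" using True ab(1) by (intro nth_mem) simp
    ultimately show ?thesis using ab(3) sB by auto
  next
    case False
    then have "ext m s T ! b = D ! (b - length (s@B))" unfolding r by (intro nth_append_right) simp
    moreover have "D ! (b - length (s@B)) \<in> set D" using False ab(2) r by (intro nth_mem) auto
    ultimately show ?thesis using ab(4) sD assms(3) by auto
  qed
qed

lemma prefers_hd: "distinct r \<Longrightarrow> prefers r X (r!0) \<Longrightarrow> False"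
  unfolding prefers_def using nth_eq_iff_index_eq by fastforce

lemma pm_abs: "pseudometric_on P (\<lambda>p q. \<bar>h p - h q\<bar> :: real)"
  unfolding pseudometric_on_def by auto

lemma metric_le:
  assumes "metric_distortion m t f \<le> ereal C" "top_profile m t \<sigma>" "metric_consistent m \<sigma> d"
  shows "metric_ratio m f \<sigma> d \<le> ereal C"
proof -
  have "metric_ratio m f \<sigma> d \<le> metric_distortion m t f"
    unfolding metric_distortion_def
    by (rule SUP_upper2[where i="(\<sigma>, d)"]) (use assms in auto)
  then show ?thesis using assms(1) by simp
qed

lemma util_ge:
  assumes "top_profile m t \<sigma>" "utility_consistent m \<sigma> u"
  shows "util_ratio m f \<sigma> u \<le> util_distortion m t f"
  unfolding util_distortion_def
  by (rule SUP_upper2[where i="(\<sigma>, u)"]) (use assms in auto)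

lemma tp_elem: "top_profile m t \<sigma> \<Longrightarrow> i < length \<sigma> \<Longrightarrow>
   length (\<sigma>!i) = t \<and> distinct (\<sigma>!i) \<and> set (\<sigma>!i) \<subseteq> {..<m}"
  unfolding top_profile_def using nth_mem by blast

lemma zero_metric:
  assumes rule: "is_rule m t f" and md: "metric_distortion m t f \<le> ereal C"
    and tp: "top_profile m t \<sigma>"
    and sub: "\<forall>i<length \<sigma>. set (\<sigma>!i) \<subseteq> U" and X0: "X0 \<in> U" "X0 < m"
  shows "\<forall>X<m. X \<notin> U \<longrightarrow> f \<sigma> X = 0"
proof -
  define h :: "nat + nat \<Rightarrow> real" where "h p = (case p of Inl i \<Rightarrow> 0 | Inr X \<Rightarrow> if X \<in> U then 0 else 1)" for p
  define d where "d = (\<lambda>p q. \<bar>h p - h q\<bar>)"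
  have dval: "d (Inl i) (Inr X) = (if X \<in> U then 0 else 1)" for i X
    unfolding d_def h_def by simp
  define \<tau> where "\<tau> = map (\<lambda>s. ext m s U) \<sigma>"
  have fe: "full_extension m \<sigma> \<tau>"
    unfolding full_extension_def \<tau>_def
    using tp_elem[OF tp] ext_distinct ext_set ext_take by (metis length_map nth_map)
  have mono: "\<forall>i<length \<sigma>. \<forall>X Y. prefers (\<tau>!i) X Y \<longrightarrow> d (Inl i) (Inr X) \<le> d (Inl i) (Inr Y)"
  proof (intro allI impI)
    fix i X Y assume i: "i < length \<sigma>" and p: "prefers (\<tau>!i) X Y"
    have p': "prefers (ext m (\<sigma>!i) U) X Y" using p i unfolding \<tau>_def by simp
    show "d (Inl i) (Inr X) \<le> d (Inl i) (Inr Y)"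
      using ext_pref[OF _ p'] sub i unfolding dval by auto
  qed
  have mc: "metric_consistent m \<sigma> d"
    unfolding metric_consistent_def using fe mono pm_abs d_def by blast
  have n: "length \<sigma> > 0" using tp unfolding top_profile_def by simp
  have SC: "SC \<sigma> d X = (if X \<in> U then 0 else real (length \<sigma>))" for X
    unfolding SC_def dval by simp
  have opt: "(MIN X\<in>{..<m}. SC \<sigma> d X) = 0"
  proof (rule antisym)
    show "(MIN X\<in>{..<m}. SC \<sigma> d X) \<le> 0"
      using X0 by (intro Min_le_iff[THEN iffD2]) (auto simp: SC)
    show "0 \<le> (MIN X\<in>{..<m}. SC \<sigma> d X)"
      using X0 by (intro Min_ge_iff[THEN iffD2]) (auto simp: SC)
  qed
  have mr: "metric_ratio m f \<sigma> d \<le> ereal C" by (rule metric_le[OF md tp mc])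
  have E0: "(\<Sum>X<m. f \<sigma> X * SC \<sigma> d X) = 0"
  proof (rule ccontr)
    assume "(\<Sum>X<m. f \<sigma> X * SC \<sigma> d X) \<noteq> 0"
    then have "metric_ratio m f \<sigma> d = \<infinity>" unfolding metric_ratio_def Let_def opt by simp
    with mr show False by simp
  qed
  have fnn: "\<forall>X<m. f \<sigma> X \<ge> 0" using rule tp unfolding is_rule_def by blast
  have "\<forall>X\<in>{..<m}. f \<sigma> X * SC \<sigma> d X = 0"
    using E0 by (subst sum_nonneg_eq_0_iff[symmetric]) (use fnn in \<open>auto simp: SC\<close>)
  then show ?thesis using n by (auto simp: SC)
qed

lemma split_metric:
  assumes rule: "is_rule m t f" and md: "metric_distortion m t f \<le> ereal C"
    and tp: "top_profile m t \<sigma>"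
    and Mn: "Mn \<subseteq> {..<length \<sigma>}"
    and maj: "\<forall>i<length \<sigma>. i \<notin> Mn \<longrightarrow> set (\<sigma>!i) \<subseteq> S"
    and mino: "\<forall>i<length \<sigma>. i \<in> Mn \<longrightarrow> set (\<sigma>!i) \<subseteq> - S"
    and X0: "X0 \<in> S" "X0 < m"
    and x1: "card Mn \<ge> 1" and N1: "length \<sigma> - card Mn \<ge> 1"
  shows "real (length \<sigma> - card Mn) * (\<Sum>X\<in>{..<m}-S. f \<sigma> X) \<le> C * real (card Mn)"
proof -
  define n where "n = length \<sigma>"
  define h :: "nat + nat \<Rightarrow> real" where
    "h p = (case p of Inl i \<Rightarrow> if i \<in> Mn then 1 else 0 | Inr X \<Rightarrow> if X \<in> S then 0 else 1)" for p
  define d where "d = (\<lambda>p q. \<bar>h p - h q\<bar>)"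
  have dval: "d (Inl i) (Inr X) = (if i \<in> Mn then (if X \<in> S then 1 else 0) else (if X \<in> S then 0 else 1))" for i X
    unfolding d_def h_def by simp
  define T where "T i = (if i \<in> Mn then - S else S)" for i
  define \<tau> where "\<tau> = map (\<lambda>i. ext m (\<sigma>!i) (T i)) [0..<n]"
  have fe: "full_extension m \<sigma> \<tau>"
    unfolding full_extension_def
  proof (intro conjI allI impI)
    show "length \<tau> = length \<sigma>" by (simp add: \<tau>_def n_def)
    fix i assume i: "i < length \<sigma>"
    have \<tau>i: "\<tau>!i = ext m (\<sigma>!i) (T i)" using i by (simp add: \<tau>_def n_def)
    from tp_elem[OF tp i] show "distinct (\<tau>!i)" "set (\<tau>!i) = {..<m}" "take (length (\<sigma>!i)) (\<tau>!i) = \<sigma>!i"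
      unfolding \<tau>i using ext_distinct ext_set ext_take by blast+
  qed
  have mono: "\<forall>i<length \<sigma>. \<forall>X Y. prefers (\<tau>!i) X Y \<longrightarrow> d (Inl i) (Inr X) \<le> d (Inl i) (Inr Y)"
  proof (intro allI impI)
    fix i X Y assume i: "i < length \<sigma>" and p: "prefers (\<tau>!i) X Y"
    have p': "prefers (ext m (\<sigma>!i) (T i)) X Y" using p i unfolding \<tau>_def n_def by simp
    have sT: "set (\<sigma>!i) \<subseteq> T i" using maj mino i unfolding T_def by auto
    show "d (Inl i) (Inr X) \<le> d (Inl i) (Inr Y)"
      using ext_pref[OF sT p'] unfolding dval T_def by (cases "i \<in> Mn") auto
  qed
  have mc: "metric_consistent m \<sigma> d"
    unfolding metric_consistent_def using fe mono pm_abs d_def by blast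
  have cMn: "card ({..<n} \<inter> Mn) = card Mn" using Mn unfolding n_def by (simp add: Int_absorb1)
  have cMn2: "card ({..<n} \<inter> - Mn) = n - card Mn"
  proof -
    have "{..<n} \<inter> - Mn = {..<n} - Mn" by auto
    then show ?thesis using Mn unfolding n_def by (simp add: card_Diff_subset finite_subset)
  qed
  have SC: "SC \<sigma> d X = (if X \<in> S then real (card Mn) else real (n - card Mn))" for X
  proof -
    have "SC \<sigma> d X = (\<Sum>i<n. if i \<in> Mn then (if X \<in> S then 1 else 0) else (if X \<in> S then 0 else 1))"
      unfolding SC_def dval n_def by simp
    also have "\<dots> = (if X \<in> S then real (card Mn) else real (n - card Mn))"
      by (simp add: sum.If_cases cMn cMn2)
    finally show ?thesis .
  qed
  define opt where "opt = (MIN X\<in>{..<m}. SC \<sigma> d X)"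
  have opt_le: "opt \<le> real (card Mn)"
    unfolding opt_def using X0 by (intro Min_le_iff[THEN iffD2]) (auto simp: SC)
  have opt_pos: "opt > 0"
    unfolding opt_def using X0 x1 N1 by (intro Min_gr_iff[THEN iffD2]) (auto simp: SC n_def)
  define E where "E = (\<Sum>X<m. f \<sigma> X * SC \<sigma> d X)"
  have mr: "metric_ratio m f \<sigma> d \<le> ereal C" by (rule metric_le[OF md tp mc])
  then have "E / opt \<le> C" using opt_pos unfolding metric_ratio_def Let_def opt_def[symmetric] E_def[symmetric] by simp
  then have EC: "E \<le> C * opt" using opt_pos by (simp add: divide_le_eq)
  have fnn: "\<forall>X<m. f \<sigma> X \<ge> 0" using rule tp unfolding is_rule_def by blast
  have SCnn: "SC \<sigma> d X \<ge> 0" for X by (simp add: SC)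
  have "real (n - card Mn) * (\<Sum>X\<in>{..<m}-S. f \<sigma> X) = (\<Sum>X\<in>{..<m}-S. f \<sigma> X * SC \<sigma> d X)"
    by (simp add: sum_distrib_left SC mult.commute)
  also have "\<dots> \<le> E" unfolding E_def
    by (rule sum_mono2) (use fnn SCnn in \<open>auto intro: mult_nonneg_nonneg\<close>)
  finally have 1: "real (n - card Mn) * (\<Sum>X\<in>{..<m}-S. f \<sigma> X) \<le> E" .
  have "E \<ge> 0" unfolding E_def using fnn SCnn by (auto intro!: sum_nonneg)
  then have C0: "C \<ge> 0"
  proof (rule contrapos_pp)
    assume "\<not> C \<ge> 0"
    then have "C * opt < 0" using opt_pos by (simp add: mult_neg_pos)
    with EC show "\<not> E \<ge> 0" by linarith
  qed
  have "C * opt \<le> C * real (card Mn)" using C0 opt_le by (rule mult_left_mono[rotated])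
  with 1 EC show ?thesis unfolding n_def by linarith
qed



lemma part1_num:
  assumes m: "(m::nat) \<ge> 1" and k: "k = nat \<lfloor>sqrt (real m)\<rfloor>"
  shows "1 \<le> k \<and> k \<le> m \<and> 1 / real k + real k / real m \<le> 3 / sqrt (real m)"
proof -
  define s where "s = sqrt (real m)"
  have s1: "s \<ge> 1" using m unfolding s_def by simp
  have ss: "s * s = real m" unfolding s_def by simp
  have kf: "real k = of_int \<lfloor>s\<rfloor>" using k s1 unfolding s_def by simp
  have kle: "real k \<le> s" using kf by simp
  have kgt: "real k > s - 1" using kf by linarith
  have k1: "real k \<ge> 1" using kf s1 by (simp add: le_floor_iff)
  have khalf: "real k \<ge> s / 2" using kgt k1 by linarith
  have "s * 1 \<le> s * s" using mult_left_mono[OF s1, of s] s1 by simp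
  then have "s \<le> real m" using ss by simp
  then have km: "k \<le> m" using kle by linarith
  have sp: "s > 0" using s1 by simp
  have a: "1 / real k \<le> 2 / s" using khalf sp k1 by (simp add: field_simps)
  have "real k / real m = real k / (s * s)" using ss by simp
  also have "\<dots> \<le> s / (s * s)" using kle sp by (intro divide_right_mono) auto
  also have "\<dots> = 1 / s" using sp by simp
  finally have b: "real k / real m \<le> 1 / s" .
  show ?thesis using a b k1 km unfolding s_def[symmetric] by simp
qed

lemma pigeon:
  assumes "(k::nat) \<ge> 1" "k \<le> m" "\<forall>X<m. g X \<ge> (0::real)" "(\<Sum>X<m. g X) = 1"
  shows "\<exists>Y<k. g Y \<le> 1 / real k"
proof (rule ccontr)
  assume "\<not> ?thesis"
  then have lt: "\<forall>Y\<in>{..<k}. 1 / real k < g Y" by auto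
  have "0 \<in> {..<k}" using assms(1) by simp
  then have ne: "{..<k} \<noteq> {}" by blast
  have "(\<Sum>Y<k. 1 / real k) < (\<Sum>Y<k. g Y)"
    using ne lt by (intro sum_strict_mono) auto
  also have "\<dots> \<le> (\<Sum>X<m. g X)" using assms(2,3) by (intro sum_mono2) auto
  finally show False using assms(1,4) by simp
qed

lemma part1:
  assumes rule: "is_rule m t f" and t: "1 \<le> t" "t \<le> m"
  shows "ereal (sqrt (real m) / 4) \<le> util_distortion m t f"
proof -
  have m1: "m \<ge> 1" using t by simp
  define k where "k = nat \<lfloor>sqrt (real m)\<rfloor>"
  from part1_num[OF m1 k_def] have k1: "1 \<le> k" and km: "k \<le> m"
    and kb: "1 / real k + real k / real m \<le> 3 / sqrt (real m)" by auto
  define \<tau> where "\<tau> = map (\<lambda>j. ext m [j] {j}) [0..<k]"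
  define \<sigma> where "\<sigma> = map (take t) \<tau>"
  have len: "length \<sigma> = k" "length \<tau> = k" unfolding \<sigma>_def \<tau>_def by auto
  have \<tau>i: "\<tau>!i = ext m [i] {i}" if "i < k" for i using that unfolding \<tau>_def by simp
  have \<sigma>i: "\<sigma>!i = take t (\<tau>!i)" if "i < k" for i using that len unfolding \<sigma>_def by simp
  have \<tau>p: "distinct (\<tau>!i) \<and> set (\<tau>!i) = {..<m} \<and> length (\<tau>!i) = m" if "i < k" for i
  proof -
    have "set [i] \<subseteq> {..<m}" using that km by simp
    then show ?thesis unfolding \<tau>i[OF that] using ext_distinct ext_set ext_length by simp
  qed
  have \<sigma>p: "length (\<sigma>!i) = t \<and> distinct (\<sigma>!i) \<and> set (\<sigma>!i) \<subseteq> {..<m}" if "i < k" for i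
    using \<tau>p[OF that] t set_take_subset[of t "\<tau>!i"] unfolding \<sigma>i[OF that] by auto
  have tp: "top_profile m t \<sigma>"
    unfolding top_profile_def
  proof
    show "\<sigma> \<noteq> []" using len k1 by auto
    show "\<forall>s\<in>set \<sigma>. length s = t \<and> distinct s \<and> set s \<subseteq> {..<m}"
      using \<sigma>p by (metis in_set_conv_nth len(1))
  qed
  have fnn: "\<forall>X<m. f \<sigma> X \<ge> 0" and fs: "(\<Sum>X<m. f \<sigma> X) = 1"
    using rule tp unfolding is_rule_def by blast+
  obtain Y where Y: "Y < k" "f \<sigma> Y \<le> 1 / real k" using pigeon[OF k1 km fnn fs] by blast
  have Ym: "Y < m" using Y km by simp
  define u where "u i X = (if i = Y then (if X = Y then 1 else 0) else 1 / real m)" for i X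
  have pa: "\<forall>i<length \<sigma>. (\<forall>X<m. 0 \<le> u i X) \<and> (\<Sum>X<m. u i X) = 1"
  proof (intro allI impI)
    fix i assume i: "i < length \<sigma>"
    have 1: "\<forall>X<m. 0 \<le> u i X" unfolding u_def by auto
    have 2: "(\<Sum>X<m. u i X) = 1"
    proof (cases "i = Y")
      case True then show ?thesis unfolding u_def using Ym by simp
    next
      case False then show ?thesis unfolding u_def using m1 by simp
    qed
    show "(\<forall>X<m. 0 \<le> u i X) \<and> (\<Sum>X<m. u i X) = 1" using 1 2 by blast
  qed
  have pb: "full_extension m \<sigma> \<tau>"
    unfolding full_extension_def using len \<tau>p \<sigma>p \<sigma>i by auto
  have pc: "\<forall>i<length \<sigma>. \<forall>X Z. prefers (\<tau> ! i) X Z \<longrightarrow> u i X \<ge> u i Z"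
  proof (intro allI impI)
    fix i X Z assume i: "i < length \<sigma>" and p: "prefers (\<tau> ! i) X Z"
    show "u i X \<ge> u i Z"
    proof (cases "i = Y \<and> Z = Y")
      case True
      then have "prefers (ext m [Y] {Y}) X Y" using p \<tau>i i len by auto
      then have "X \<in> {Y}" using ext_pref[of "[Y]" "{Y}"] by auto
      then show ?thesis using True unfolding u_def by simp
    next
      case False then show ?thesis unfolding u_def by auto
    qed
  qed
  have uc: "utility_consistent m \<sigma> u"
    unfolding utility_consistent_def using pa pb pc by blast
  define a where "a = (real k - 1) / real m"
  have a0: "a \<ge> 0" using k1 unfolding a_def by simp
  have SW: "SW \<sigma> u X = (if X = Y then 1 else 0) + a" for X
  proof -
    have "SW \<sigma> u X = u Y X + (\<Sum>i\<in>{..<k}-{Y}. u i X)"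
      unfolding SW_def len using Y by (simp add: sum.remove)
    also have "(\<Sum>i\<in>{..<k}-{Y}. u i X) = (\<Sum>i\<in>{..<k}-{Y}. 1 / real m)"
      by (rule sum.cong) (auto simp: u_def)
    also have "\<dots> = a" using Y k1 unfolding a_def by (simp add: of_nat_diff)
    finally show ?thesis unfolding u_def by simp
  qed
  define E where "E = (\<Sum>X<m. f \<sigma> X * SW \<sigma> u X)"
  have E: "E = f \<sigma> Y + a"
  proof -
    have "E = (\<Sum>X<m. (if X = Y then f \<sigma> X else 0) + f \<sigma> X * a)"
      unfolding E_def SW by (rule sum.cong) (auto simp: algebra_simps)
    also have "\<dots> = f \<sigma> Y + a" using Ym fs by (simp add: sum.distrib sum_distrib_right[symmetric])
    finally show ?thesis .
  qed
  define OPT where "OPT = (MAX X\<in>{..<m}. SW \<sigma> u X)"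
  have OPT: "OPT \<ge> 1 + a" unfolding OPT_def using Ym by (intro Max_ge_iff[THEN iffD2]) (auto simp: SW)
  have Eb: "E \<le> 3 / sqrt (real m)"
  proof -
    have "a \<le> real k / real m" unfolding a_def by (simp add: divide_right_mono)
    then show ?thesis using E Y(2) kb by linarith
  qed
  have sp: "sqrt (real m) > 0" using m1 by simp
  have "ereal (sqrt (real m) / 4) \<le> util_ratio m f \<sigma> u"
  proof (cases "E > 0")
    case True
    have "sqrt (real m) / 4 \<le> sqrt (real m) / 3" using sp by simp
    also have "\<dots> = 1 / (3 / sqrt (real m))" by simp
    also have "\<dots> \<le> 1 / E" using True Eb sp by (intro divide_left_mono) (auto intro: divide_pos_pos)
    also have "\<dots> \<le> OPT / E" using True OPT a0 by (intro divide_right_mono) auto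
    finally show ?thesis using True unfolding util_ratio_def Let_def E_def[symmetric] OPT_def[symmetric] by simp
  next
    case False then show ?thesis unfolding util_ratio_def Let_def E_def[symmetric] by simp
  qed
  also have "\<dots> \<le> util_distortion m t f" by (rule util_ge[OF tp uc])
  finally show ?thesis .
qed



lemma aux_tD: "(a::real) > 0 \<Longrightarrow> g > 0 \<Longrightarrow> P > 0 \<Longrightarrow> a * (c/(g*a) + g/P) = c/g + g*a/P"
  by (simp add: field_simps)

lemma part2_num:
  fixes m t q G :: nat and C' E OPT :: real
  assumes t1: "1 \<le> t" and mt: "6*t \<le> m" and q: "q = m div (3*t)"
    and G: "G = nat \<lceil>sqrt (real m / real t)\<rceil>" and C': "C' \<ge> 0" and E0: "E > 0"
    and Eb: "E \<le> C' / (real G * (real t + 1)) + real G / (real t + real (m - 2*q*t))"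
    and opt: "OPT \<ge> real q / (real t + 1)"
  shows "real m * sqrt (real m) / (real t * sqrt (real t)) / (6 * (12 + C')) \<le> OPT / E"
proof -
  define R where "R = real m / real t"
  define r where "r = sqrt R"
  have tp: "real t > 0" using t1 by simp
  have R6: "R \<ge> 6" unfolding R_def using mt tp by (simp add: field_simps)
  have r1: "r \<ge> 1" unfolding r_def using R6 by simp
  have rr: "r * r = R" unfolding r_def using R6 by simp
  have q1: "q * (3*t) \<le> m" unfolding q by simp
  have q2: "m < (q+1) * (3*t)" unfolding q using t1 by (subst div_less_iff_less_mult[symmetric]) auto
  have qR: "real q \<ge> R / 6"
  proof -
    have "real m < real ((q+1)*(3*t))" using q2 by (simp only: of_nat_less_iff)
    moreover have "real ((q+1)*(3*t)) = (real q + 1) * (3 * real t)" by (simp add: algebra_simps)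
    ultimately have "real m < (real q + 1) * (3 * real t)" by simp
    then have "R < (real q + 1) * 3" unfolding R_def using tp by (simp add: field_simps)
    then have "R < 3 * real q + 3" by (simp add: algebra_simps)
    then show ?thesis using R6 by linarith
  qed
  have p: "real (m - 2*q*t) \<ge> real m / 3"
  proof -
    have e1: "q*(3*t) = 3*(q*t)" "2*q*t = 2*(q*t)" by (simp_all add: mult.assoc mult.left_commute)
    have le: "2*q*t \<le> m" using q1 unfolding e1 by linarith
    have w: "real (m - 2*q*t) = real m - 2*(real q * real t)" using le by (simp add: of_nat_diff)
    have "real (q*(3*t)) \<le> real m" using q1 by (simp only: of_nat_le_iff)
    then have w2: "3*(real q * real t) \<le> real m" by (simp add: algebra_simps)
    show ?thesis unfolding w using w2 by linarith
  qed
  have Gr: "real G \<ge> r" "real G \<le> 2 * r"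
  proof -
    have z: "0 \<le> \<lceil>r\<rceil>" using r1 by simp
    have "real G = real (nat \<lceil>r\<rceil>)" unfolding G r_def R_def by simp
    also have "\<dots> = of_int \<lceil>r\<rceil>" using of_nat_nat[OF z] by simp
    finally have eq: "real G = of_int \<lceil>r\<rceil>" .
    have "of_int \<lceil>r\<rceil> - 1 < r \<and> r \<le> of_int \<lceil>r\<rceil>" by (rule ceiling_correct)
    then show "real G \<ge> r" "real G \<le> 2 * r" using r1 unfolding eq by linarith+
  qed
  have Gp: "real G > 0" using Gr r1 by simp
  define D where "D = C' / (real G * (real t + 1)) + real G / (real t + real (m - 2*q*t))"
  have tpp: "real t + real (m - 2*q*t) \<ge> real m / 3" using p by simp
  have m3: "real m / 3 > 0" using mt t1 by simp
  have a1: "C' / real G \<le> C' / r" using Gr r1 C' by (intro divide_left_mono) auto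
  have a2: "real G * (real t + 1) / (real t + real (m - 2*q*t)) \<le> 12 / r"
  proof -
    have "real G * (real t + 1) / (real t + real (m - 2*q*t)) \<le> (2*r) * (2 * real t) / (real m / 3)"
      using Gr t1 tpp m3 Gp by (intro frac_le mult_mono) auto
    also have "\<dots> = 12 * r / R" unfolding R_def using tp by (simp add: field_simps)
    also have "\<dots> = 12 / r" unfolding rr[symmetric] using r1 by (simp add: field_simps)
    finally show ?thesis .
  qed
  have Dp: "D > 0" using E0 Eb unfolding D_def by linarith
  have tD: "(real t + 1) * D = C' / real G + real G * (real t + 1) / (real t + real (m - 2*q*t))"
    unfolding D_def using Gp tp m3 tpp by (intro aux_tD) auto
  have tD2: "(real t + 1) * D \<le> (12 + C') / r" using a1 a2 tD by (simp add: add_divide_distrib)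
  have "real m * sqrt (real m) / (real t * sqrt (real t)) = R * r"
    unfolding R_def r_def by (simp add: real_sqrt_divide)
  also have "R * r / (6 * (12 + C')) = (R / 6) * r / (12 + C')" by simp
  also have "\<dots> \<le> real q * r / (12 + C')" using qR r1 C' by (intro divide_right_mono mult_right_mono) auto
  also have "\<dots> = real q / ((12 + C') / r)" using r1 by simp
  also have "\<dots> \<le> real q / ((real t + 1) * D)"
  proof -
    have pos1: "(real t + 1) * D > 0" using Dp tp by simp
    have pos2: "(12 + C') / r > 0" using C' r1 by simp
    show ?thesis by (rule divide_left_mono[OF tD2 _ mult_pos_pos[OF pos2 pos1]]) simp
  qed
  also have "\<dots> = (real q / (real t + 1)) / D" by (simp add: divide_divide_eq_left)
  also have "\<dots> \<le> OPT / D" using opt Dp by (intro divide_right_mono) auto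
  also have "\<dots> \<le> OPT / E"
  proof -
    have "real q / (real t + 1) \<ge> 0" by simp
    then have "OPT \<ge> 0" using opt by linarith
    then show ?thesis using E0 Eb unfolding D_def by (intro divide_left_mono) auto
  qed
  finally show ?thesis .
qed



definition lo :: "nat \<Rightarrow> nat \<Rightarrow> nat \<Rightarrow> nat \<Rightarrow> nat" where
  "lo t q G i = (if i < q then i*t else q*t + ((i-q) div G)*t)"

lemma div_range_eq: "0 < (t::nat) \<Longrightarrow> b*t \<le> y \<Longrightarrow> y < b*t + t \<Longrightarrow> y div t = b"
  by (rule div_nat_eqI) (simp_all add: mult.commute)

lemma div_range: "0 < (G::nat) \<Longrightarrow> x div G = b \<Longrightarrow> b*G \<le> x \<and> x < b*G + G"
proof -
  assume G: "0 < G" and b: "x div G = b"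
  have "b*G \<le> x" using b div_times_less_eq_dividend by blast
  moreover have "x div G < b + 1" using b by simp
  then have "x < (b+1)*G" using G by (simp add: div_less_iff_less_mult)
  ultimately show ?thesis by simp
qed

lemma lo_min: "i < q \<Longrightarrow> lo t q G i + t \<le> q*t"
proof -
  assume "i < q"
  then have "Suc i * t \<le> q * t" by (intro mult_le_mono1) simp
  then show ?thesis unfolding lo_def using \<open>i < q\<close> by simp
qed

lemma lo_maj: "0 < G \<Longrightarrow> q \<le> i \<Longrightarrow> i < q + G*q \<Longrightarrow> q*t \<le> lo t q G i \<and> lo t q G i + t \<le> 2*q*t"
proof -
  assume G: "0 < G" and i: "q \<le> i" "i < q + G*q"
  have "i - q < q * G" using i by (simp add: mult.commute)
  then have b: "(i - q) div G < q" by (rule less_mult_imp_div_less)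
  then have "Suc ((i - q) div G) * t \<le> q * t" by (intro mult_le_mono1) simp
  then show ?thesis unfolding lo_def using i by (simp add: algebra_simps)
qed

lemma lo_min_mem: "0 < t \<Longrightarrow> i < q \<Longrightarrow> X \<in> {lo t q G i..<lo t q G i + t} \<Longrightarrow> i = X div t"
  unfolding lo_def using div_range_eq[of t i X] by auto

lemma lo_maj_mem:
  assumes t: "0 < t" and G: "0 < G" and i: "q \<le> i" and X: "X \<in> {lo t q G i..<lo t q G i + t}"
  shows "q + ((X - q*t) div t)*G \<le> i \<and> i < q + ((X - q*t) div t)*G + G"
proof -
  define b where "b = (i - q) div G"
  have Xr: "q*t + b*t \<le> X" "X < q*t + b*t + t" using X i unfolding lo_def b_def by auto
  have "(X - q*t) div t = b" using Xr t by (intro div_range_eq) auto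
  moreover have "b*G \<le> i - q \<and> i - q < b*G + G" using div_range[OF G b_def[symmetric]] .
  ultimately show ?thesis using i by auto
qed



lemma sum_unif:
  assumes "T \<subseteq> {..<(m::nat)}" "T \<noteq> {}"
  shows "(\<Sum>X<m. if X \<in> T then 1 / real (card T) else 0) = 1"
proof -
  have fin: "finite T" using finite_subset[OF assms(1)] by simp
  have "(\<Sum>X<m. if X \<in> T then 1 / real (card T) else 0) = (\<Sum>X\<in>{..<m} \<inter> T. 1 / real (card T))"
    by (rule sum.inter_restrict[symmetric]) simp
  also have "{..<m} \<inter> T = T" using assms(1) by blast
  finally have "(\<Sum>X<m. if X \<in> T then 1 / real (card T) else 0) = real (card T) * (1 / real (card T))" by simp
  moreover have "card T > 0" using fin assms(2) by (simp add: card_gt_0_iff)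
  ultimately show ?thesis by simp
qed

lemma part2:
  assumes rule: "is_rule m t f" and md: "metric_distortion m t f \<le> ereal C"
    and t1: "1 \<le> t" and mt: "6*t \<le> m"
  shows "ereal (real m * sqrt (real m) / (real t * sqrt (real t)) / (6 * (12 + \<bar>C\<bar>))) \<le> util_distortion m t f"
proof -
  define q where "q = m div (3*t)"
  define G where "G = nat \<lceil>sqrt (real m / real t)\<rceil>"
  have t0: "0 < t" using t1 by simp
  have "0 < m div (3*t)" using mt t1 by (subst div_greater_zero_iff) auto
  then have q1: "q \<ge> 1" unfolding q_def by simp
  have q3: "q*(3*t) \<le> m" unfolding q_def by simp
  have qt: "2*q*t < m"
  proof -
    have e1: "q*(3*t) = 3*(q*t)" "2*q*t = 2*(q*t)" by (simp_all add: mult.assoc mult.left_commute)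
    have "q*t \<ge> 1" using q1 t1 by simp
    then show ?thesis using q3 unfolding e1 by linarith
  qed
  have G1: "G \<ge> 1"
  proof -
    have "sqrt (real m / real t) \<ge> 1" using mt t1 by simp
    then have "\<lceil>sqrt (real m / real t)\<rceil> \<ge> 1" by (simp add: le_ceiling_iff)
    then show ?thesis unfolding G_def by linarith
  qed
  have G0: "0 < G" using G1 by simp
  define N where "N = G*q"
  define n where "n = q + N"
  define L where "L i = lo t q G i" for i
  define sg where "sg i = [L i..<L i + t]" for i
  define \<sigma> where "\<sigma> = map sg [0..<n]"
  have len: "length \<sigma> = n" unfolding \<sigma>_def by simp
  have \<sigma>i: "\<sigma>!i = [L i..<L i + t]" if "i < n" for i using that unfolding \<sigma>_def sg_def by simp
  have Lmin: "L i + t \<le> q*t" if "i < q" for i using lo_min[OF that] unfolding L_def .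
  have Lmaj: "q*t \<le> L i \<and> L i + t \<le> 2*q*t" if "q \<le> i" "i < n" for i
    using lo_maj[OF G0 that(1)] that(2) unfolding L_def n_def N_def by simp
  have Lb: "L i + t \<le> 2*q*t" if "i < n" for i
    using Lmin Lmaj that by (cases "i < q") force+
  have tp: "top_profile m t \<sigma>"
    unfolding top_profile_def
  proof
    show "\<sigma> \<noteq> []" using len q1 unfolding n_def by auto
    show "\<forall>s\<in>set \<sigma>. length s = t \<and> distinct s \<and> set s \<subseteq> {..<m}"
    proof
      fix s assume "s \<in> set \<sigma>"
      then obtain i where i: "i < n" "s = \<sigma>!i" using len by (metis in_set_conv_nth)
      show "length s = t \<and> distinct s \<and> set s \<subseteq> {..<m}"
        using i \<sigma>i Lb[OF i(1)] qt by auto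
    qed
  qed
  have fnn: "\<forall>X<m. f \<sigma> X \<ge> 0" and fs: "(\<Sum>X<m. f \<sigma> X) = 1"
    using rule tp unfolding is_rule_def by blast+
  have fz: "\<forall>X<m. X \<notin> {..<2*q*t} \<longrightarrow> f \<sigma> X = 0"
  proof (rule zero_metric[OF rule md tp])
    show "\<forall>i<length \<sigma>. set (\<sigma>!i) \<subseteq> {..<2*q*t}"
    proof (intro allI impI)
      fix i assume i: "i < length \<sigma>"
      then have "L i + t \<le> 2*q*t" "\<sigma>!i = [L i..<L i + t]" using Lb \<sigma>i len by auto
      then show "set (\<sigma>!i) \<subseteq> {..<2*q*t}" by auto
    qed
    show "0 \<in> {..<2*q*t}" using q1 t1 by simp
    show "0 < m" using qt by simp
  qed
  define S where "S = {q*t..<2*q*t}"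
  define F where "F = (\<Sum>X\<in>{..<m}-S. f \<sigma> X)"
  have NF: "real N * F \<le> C * real q"
  proof -
    have "real (length \<sigma> - card {..<q}) * (\<Sum>X\<in>{..<m}-S. f \<sigma> X) \<le> C * real (card {..<q})"
    proof (rule split_metric[OF rule md tp])
      show "{..<q} \<subseteq> {..<length \<sigma>}" using len unfolding n_def by auto
      show "\<forall>i<length \<sigma>. i \<notin> {..<q} \<longrightarrow> set (\<sigma>!i) \<subseteq> S"
      proof (intro allI impI)
        fix i assume i: "i < length \<sigma>" "i \<notin> {..<q}"
        then have "q*t \<le> L i \<and> L i + t \<le> 2*q*t" "\<sigma>!i = [L i..<L i + t]" using Lmaj \<sigma>i len by auto
        then show "set (\<sigma>!i) \<subseteq> S" unfolding S_def by auto
      qed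
      show "\<forall>i<length \<sigma>. i \<in> {..<q} \<longrightarrow> set (\<sigma>!i) \<subseteq> - S"
      proof (intro allI impI)
        fix i assume i: "i < length \<sigma>" "i \<in> {..<q}"
        then have "L i + t \<le> q*t" "\<sigma>!i = [L i..<L i + t]" using Lmin \<sigma>i len by auto
        then show "set (\<sigma>!i) \<subseteq> - S" unfolding S_def by auto
      qed
      show "q*t \<in> S" unfolding S_def using q1 t1 by simp
      show "q*t < m" using qt by simp
      show "card {..<q} \<ge> 1" using q1 by simp
      show "length \<sigma> - card {..<q} \<ge> 1" using len G1 q1 unfolding n_def N_def by simp
    qed
    then show ?thesis using len unfolding F_def n_def by simp
  qed
  define Y where "Y = 2*q*t"
  define p where "p = m - 2*q*t"
  define P where "P = {2*q*t..<m}"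
  define Tu where "Tu i = (if i < q then {L i..<L i + t} \<union> {Y} else {L i..<L i + t} \<union> P)" for i
  define u where "u i X = (if X \<in> Tu i then 1 / real (card (Tu i)) else 0)" for i X
  have cardmin: "card (Tu i) = t + 1" if "i < q" for i
  proof -
    have "Y \<notin> {L i..<L i + t}" using Lmin[OF that] unfolding Y_def by auto
    then show ?thesis unfolding Tu_def using that by simp
  qed
  have cardmaj: "card (Tu i) = t + p" if "q \<le> i" "i < n" for i
  proof -
    have d: "{L i..<L i + t} \<inter> P = {}" using Lmaj[OF that] unfolding P_def by auto
    have "card ({L i..<L i + t} \<union> P) = t + p"
      using card_Un_disjoint[OF _ _ d] unfolding P_def p_def by simp
    then show ?thesis unfolding Tu_def using that by simp
  qed
  have Tsub: "Tu i \<subseteq> {..<m}" if "i < n" for i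
    using Lb[OF that] qt unfolding Tu_def Y_def P_def by auto
  have Tne: "Tu i \<noteq> {}" for i unfolding Tu_def using t0 by auto
  have sTu: "set (\<sigma>!i) \<subseteq> Tu i" if "i < n" for i
    using \<sigma>i[OF that] unfolding Tu_def by auto
  define \<tau> where "\<tau> = map (\<lambda>i. ext m (\<sigma>!i) (Tu i)) [0..<n]"
  have pa: "\<forall>i<length \<sigma>. (\<forall>X<m. 0 \<le> u i X) \<and> (\<Sum>X<m. u i X) = 1"
  proof (intro allI impI)
    fix i assume i: "i < length \<sigma>"
    have 1: "\<forall>X<m. 0 \<le> u i X" unfolding u_def by auto
    have 2: "(\<Sum>X<m. u i X) = 1" unfolding u_def using sum_unif[OF Tsub Tne] i len by simp
    show "(\<forall>X<m. 0 \<le> u i X) \<and> (\<Sum>X<m. u i X) = 1" using 1 2 by blast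
  qed
  have pb: "full_extension m \<sigma> \<tau>"
    unfolding full_extension_def
  proof (intro conjI allI impI)
    show "length \<tau> = length \<sigma>" by (simp add: \<tau>_def len)
    fix i assume i: "i < length \<sigma>"
    have \<tau>i: "\<tau>!i = ext m (\<sigma>!i) (Tu i)" using i len by (simp add: \<tau>_def)
    from tp_elem[OF tp i] show "distinct (\<tau>!i)" "set (\<tau>!i) = {..<m}" "take (length (\<sigma>!i)) (\<tau>!i) = \<sigma>!i"
      unfolding \<tau>i using ext_distinct ext_set ext_take by blast+
  qed
  have pc: "\<forall>i<length \<sigma>. \<forall>X Z. prefers (\<tau> ! i) X Z \<longrightarrow> u i X \<ge> u i Z"
  proof (intro allI impI)
    fix i X Z assume i: "i < length \<sigma>" and pr: "prefers (\<tau> ! i) X Z"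
    have pr': "prefers (ext m (\<sigma>!i) (Tu i)) X Z" using pr i len by (simp add: \<tau>_def)
    show "u i X \<ge> u i Z"
    proof (cases "Z \<in> Tu i")
      case True
      then have "X \<in> Tu i" using ext_pref[OF sTu pr'] i len by simp
      then show ?thesis using True unfolding u_def by simp
    next
      case False then show ?thesis unfolding u_def by simp
    qed
  qed
  have uc: "utility_consistent m \<sigma> u"
    unfolding utility_consistent_def using pa pb pc by blast
  have unn: "u i X \<ge> 0" for i X unfolding u_def by simp
  have SWY: "SW \<sigma> u Y \<ge> real q / (real t + 1)"
  proof -
    have "(\<Sum>i<q. u i Y) = (\<Sum>i<q. 1 / (real t + 1))"
    proof (rule sum.cong)
      fix i assume "i \<in> {..<q}"
      then have "i < q" by simp
      then show "u i Y = 1 / (real t + 1)" unfolding u_def using cardmin[of i] unfolding Tu_def by simp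
    qed simp
    also have "\<dots> = real q / (real t + 1)" by simp
    finally have "(\<Sum>i<q. u i Y) = real q / (real t + 1)" .
    moreover have "(\<Sum>i<q. u i Y) \<le> (\<Sum>i<n. u i Y)"
      using unn unfolding n_def by (intro sum_mono2) auto
    ultimately show ?thesis unfolding SW_def len by simp
  qed
  have SWmin: "SW \<sigma> u X \<le> 1 / (real t + 1)" if X: "X < q*t" for X
  proof -
    have pt: "u i X \<le> (if i = X div t then 1 / (real t + 1) else 0)" if i: "i < n" for i
    proof (cases "X \<in> Tu i")
      case False then show ?thesis unfolding u_def by simp
    next
      case True
      show ?thesis
      proof (cases "i < q")
        case iq: True
        have "X \<noteq> Y" using X unfolding Y_def by simp
        then have "X \<in> {L i..<L i + t}" using True iq unfolding Tu_def by simp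
        then have "i = X div t" using lo_min_mem[OF t0 iq] unfolding L_def by simp
        then show ?thesis unfolding u_def using cardmin[OF iq] True by (simp add: add.commute)
      next
        case False
        have "q*t \<le> L i" using Lmaj False i by simp
        then have "X \<notin> Tu i" using X False unfolding Tu_def P_def by auto
        then show ?thesis using True by simp
      qed
    qed
    have "SW \<sigma> u X \<le> (\<Sum>i<n. if i = X div t then 1 / (real t + 1) else 0)"
      unfolding SW_def len using pt by (intro sum_mono) auto
    also have "\<dots> \<le> 1 / (real t + 1)" by (simp add: sum.delta')
    finally show ?thesis .
  qed
  have SWmaj: "SW \<sigma> u X \<le> real G / (real t + real p)" if X: "X \<in> S" for X
  proof -
    define b where "b = (X - q*t) div t"
    define A where "A = {q + b*G..<q + b*G + G}"
    have pt: "u i X \<le> (if i \<in> A then 1 / (real t + real p) else 0)" if i: "i < n" for i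
    proof (cases "X \<in> Tu i")
      case False then show ?thesis unfolding u_def by simp
    next
      case True
      show ?thesis
      proof (cases "i < q")
        case iq: True
        have "X \<notin> Tu i" using X Lmin[OF iq] iq unfolding Tu_def S_def Y_def by auto
        then show ?thesis using True by simp
      next
        case False
        have "X \<notin> P" using X unfolding S_def P_def by auto
        then have "X \<in> {L i..<L i + t}" using True False unfolding Tu_def by simp
        then have "i \<in> A" using lo_maj_mem[OF t0 G0, of q i X] False unfolding A_def b_def L_def by auto
        then show ?thesis unfolding u_def using cardmaj[of i] False i True by simp
      qed
    qed
    have "SW \<sigma> u X \<le> (\<Sum>i<n. if i \<in> A then 1 / (real t + real p) else 0)"
      unfolding SW_def len using pt by (intro sum_mono) auto
    also have "\<dots> = real (card ({..<n} \<inter> A)) * (1 / (real t + real p))"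
      by (simp add: sum.If_cases)
    also have "\<dots> \<le> real (card A) * (1 / (real t + real p))"
    proof -
      have "card ({..<n} \<inter> A) \<le> card A" unfolding A_def by (rule card_mono) auto
      then show ?thesis by (intro mult_right_mono) auto
    qed
    also have "\<dots> = real G / (real t + real p)" unfolding A_def by simp
    finally show ?thesis .
  qed
  define c1 where "c1 = 1 / (real t + 1)"
  define c2 where "c2 = real G / (real t + real p)"
  have c2nn: "c2 \<ge> 0" unfolding c2_def by simp
  define E where "E = (\<Sum>X<m. f \<sigma> X * SW \<sigma> u X)"
  have ptE: "f \<sigma> X * SW \<sigma> u X \<le> f \<sigma> X * ((if X \<in> S then 0 else c1) + c2)" if X: "X < m" for X
  proof (cases "X < 2*q*t")
    case False
    then have "f \<sigma> X = 0" using fz X by simp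
    then show ?thesis by simp
  next
    case True
    have "SW \<sigma> u X \<le> (if X \<in> S then 0 else c1) + c2"
    proof (cases "X < q*t")
      case True
      then have "X \<notin> S" unfolding S_def by simp
      then show ?thesis using SWmin[OF True] c2nn unfolding c1_def by simp
    next
      case False
      then have "X \<in> S" using True unfolding S_def by simp
      then show ?thesis using SWmaj[of X] unfolding c2_def by simp
    qed
    then show ?thesis using fnn X by (intro mult_left_mono) auto
  qed
  have "E \<le> (\<Sum>X<m. f \<sigma> X * ((if X \<in> S then 0 else c1) + c2))"
    unfolding E_def using ptE by (intro sum_mono) auto
  also have "\<dots> = (\<Sum>X<m. (if X \<in> S then 0 else c1 * f \<sigma> X)) + (\<Sum>X<m. c2 * f \<sigma> X)"
    by (subst sum.distrib[symmetric]) (rule sum.cong, auto simp: algebra_simps)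
  also have "(\<Sum>X<m. (if X \<in> S then 0 else c1 * f \<sigma> X)) = c1 * F"
  proof -
    have "(\<Sum>X<m. (if X \<in> S then 0 else c1 * f \<sigma> X)) = (\<Sum>X\<in>{..<m} \<inter> - S. c1 * f \<sigma> X)"
      by (simp add: sum.If_cases)
    also have "{..<m} \<inter> - S = {..<m} - S" by auto
    finally show ?thesis unfolding F_def by (simp add: sum_distrib_left)
  qed
  also have "(\<Sum>X<m. c2 * f \<sigma> X) = c2" using fs by (simp add: sum_distrib_left[symmetric])
  finally have E1: "E \<le> c1 * F + c2" .
  have GF: "real G * F \<le> \<bar>C\<bar>"
  proof -
    have "real q * (real G * F) \<le> real q * \<bar>C\<bar>"
    proof -
      have "real q * (real G * F) = real N * F" unfolding N_def by simp
      also have "\<dots> \<le> C * real q" by (rule NF)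
      also have "\<dots> \<le> \<bar>C\<bar> * real q" by (intro mult_right_mono) auto
      also have "\<dots> = real q * \<bar>C\<bar>" by simp
      finally show ?thesis .
    qed
    then show ?thesis using q1 by simp
  qed
  have Gp: "real G > 0" using G1 by simp
  have "c1 * F \<le> \<bar>C\<bar> / (real G * (real t + 1))"
  proof -
    have "F \<le> \<bar>C\<bar> / real G" using GF Gp by (simp add: field_simps)
    then have "F / (real t + 1) \<le> \<bar>C\<bar> / real G / (real t + 1)" by (intro divide_right_mono) auto
    then show ?thesis unfolding c1_def by simp
  qed
  then have Eb: "E \<le> \<bar>C\<bar> / (real G * (real t + 1)) + real G / (real t + real (m - 2*q*t))"
    using E1 unfolding c2_def p_def by linarith
  define OPT where "OPT = (MAX X\<in>{..<m}. SW \<sigma> u X)"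
  have OPT: "OPT \<ge> real q / (real t + 1)"
  proof -
    have "SW \<sigma> u Y \<le> OPT" unfolding OPT_def using qt unfolding Y_def by (intro Max_ge) auto
    then show ?thesis using SWY by linarith
  qed
  have "ereal (real m * sqrt (real m) / (real t * sqrt (real t)) / (6 * (12 + \<bar>C\<bar>))) \<le> util_ratio m f \<sigma> u"
  proof (cases "E > 0")
    case True
    have "real m * sqrt (real m) / (real t * sqrt (real t)) / (6 * (12 + \<bar>C\<bar>)) \<le> OPT / E"
      by (rule part2_num[OF t1 mt q_def G_def _ True Eb OPT]) simp
    then show ?thesis using True unfolding util_ratio_def Let_def E_def[symmetric] OPT_def[symmetric] by simp
  next
    case False then show ?thesis unfolding util_ratio_def Let_def E_def[symmetric] by simp
  qed
  also have "\<dots> \<le> util_distortion m t f" by (rule util_ge[OF tp uc])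
  finally show ?thesis .
qed

lemma small_case:
  assumes t1: "1 \<le> t" and mt: "\<not> 6*t \<le> m"
  shows "real m * sqrt (real m) / (real t * sqrt (real t)) \<le> 18"
proof -
  have tp: "real t > 0" using t1 by simp
  have R: "real m / real t < 6" using mt tp by (simp add: field_simps)
  have R0: "real m / real t \<ge> 0" by simp
  have "sqrt (real m / real t) < sqrt 9" using R by (intro real_sqrt_less_mono) simp
  then have s3: "sqrt (real m / real t) < 3" by simp
  have "real m * sqrt (real m) / (real t * sqrt (real t)) = (real m / real t) * sqrt (real m / real t)"
    by (simp add: real_sqrt_divide)
  also have "\<dots> \<le> 6 * 3" using R R0 s3 by (intro mult_mono) auto
  finally show ?thesis by simp
qed

theorem mainTheorem11:
  shows "\<forall>C::real. \<exists>c::real. c > 0 \<and>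
    (\<forall>(m::nat) (t::nat) f. 1 \<le> t \<and> t \<le> m \<and> is_rule m t f \<and> metric_distortion m t f \<le> ereal C \<longrightarrow>
       ereal (c * max (real m * sqrt (real m) / (real t * sqrt (real t))) (sqrt (real m)))
         \<le> util_distortion m t f)"
proof
  fix C :: real
  define c where "c = 1 / (60 * (12 + \<bar>C\<bar>))"
  have c0: "c > 0" unfolding c_def by (simp add: add_pos_nonneg)
  have K: "12 + \<bar>C\<bar> \<ge> 12" by simp
  have cle1: "c \<le> 1 / (6 * (12 + \<bar>C\<bar>))" unfolding c_def
    by (rule divide_left_mono) (use K in \<open>auto intro: mult_pos_pos\<close>)
  have cle2: "c \<le> 1 / 720" unfolding c_def
    by (rule divide_left_mono) (use K in \<open>auto intro: mult_pos_pos\<close>)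
  show "\<exists>c::real. c > 0 \<and>
    (\<forall>(m::nat) (t::nat) f. 1 \<le> t \<and> t \<le> m \<and> is_rule m t f \<and> metric_distortion m t f \<le> ereal C \<longrightarrow>
       ereal (c * max (real m * sqrt (real m) / (real t * sqrt (real t))) (sqrt (real m)))
         \<le> util_distortion m t f)"
  proof (intro exI conjI allI impI)
    show "c > 0" by (rule c0)
    fix m t :: nat and f
    assume A: "1 \<le> t \<and> t \<le> m \<and> is_rule m t f \<and> metric_distortion m t f \<le> ereal C"
    then have t1: "1 \<le> t" and tm: "t \<le> m" and rule: "is_rule m t f" and md: "metric_distortion m t f \<le> ereal C"
      by auto
    define a where "a = real m * sqrt (real m) / (real t * sqrt (real t))"
    define b where "b = sqrt (real m)"
    have a0: "a \<ge> 0" unfolding a_def by simp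
    have P1: "ereal (b / 4) \<le> util_distortion m t f" unfolding b_def by (rule part1[OF rule t1 tm])
    have b1: "b \<ge> 1" unfolding b_def using t1 tm by simp
    have hb: "ereal (c * b) \<le> util_distortion m t f"
    proof -
      have "c * b \<le> b / 4" using cle2 b1 by (simp add: field_simps)
      then show ?thesis using P1 by (meson ereal_less_eq(3) order_trans)
    qed
    have ha: "ereal (c * a) \<le> util_distortion m t f"
    proof (cases "6*t \<le> m")
      case True
      have P2: "ereal (a / (6 * (12 + \<bar>C\<bar>))) \<le> util_distortion m t f"
        unfolding a_def by (rule part2[OF rule md t1 True])
      have "c * a \<le> a / (6 * (12 + \<bar>C\<bar>))"
        using mult_right_mono[OF cle1 a0] by simp
      then show ?thesis using P2 by (meson ereal_less_eq(3) order_trans)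
    next
      case False
      have "a \<le> 18" unfolding a_def by (rule small_case[OF t1 False])
      then have "c * a \<le> (1/720) * 18" using cle2 a0 c0 by (intro mult_mono) auto
      also have "\<dots> \<le> b / 4" using b1 by simp
      finally show ?thesis using P1 by (meson ereal_less_eq(3) order_trans)
    qed
    have "c * max a b = max (c * a) (c * b)" using c0 by (simp add: max_def)
    then show "ereal (c * max a b) \<le> util_distortion m t f"
      using ha hb by (simp add: max_def)
  qed
qed


end
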